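(* Let $(F,<_F)$ and $(G,<_G)$ be ordered groups and let $\prec$ be the ordering of $F*G$ described in the context. Then the canonical homomorphism $F*G\to F$ (killing $G$) is an order-homomorphism with respect to $\prec$ and $<_F$, but if $F$ and $G$ are both nontrivial, the canonical homomorphism $F*G\to G$ (killing $F$) is not an order-homomorphism with respect to $\prec$ and $<_G$.
   Context: A homomorphism $\phi$ between ordered groups is an order-homomorphism if $x\le y$ implies $\phi(x)\le\phi(y)$. Construction of $\prec$: order $F\times G$ lexicographically ($(f,g)<(f',g')$ iff $f<_Ff'$, or $f=f'$ and $g<_Gg'$); in $R=\mathbb{Z}(F\times G)$ call a nonzero element positive if the coefficient of its largest group element is a positive integer. Let $\rho\colon F*G\to M_2(R[t])$ be the homomorphism with $\rho(f)=\begin{pmatrix} f&(f-1)t\\0&1\end{pmatrix}$, $\rho(g)=\begin{pmatrix}1&0\\(g-1)t&g\end{pmatrix}$; it is injective. Order matrix positions $(1,1)$, $(2,2)$, then the off-diagonal ones in a fixed order. A nonzero $M=\sum_iM_it^i$ is positive if for the least $n$ with $M_n\ne0$ the first nonzero entry of $M_n$ is positive in $R$. Set $x\prec y$ iff $\rho(y)-\rho(x)$ is positive. *)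

theory Defs
  imports "HOL-Analysis.Analysis" "HOL-Library.Poly_Mapping" "HOL-Library.Product_Plus"
begin

text \<open>Groups are written additively (type class group_add, NOT assumed commutative).
  An ordered group: a strict total order invariant under left and right translation.\<close>

definition bi_ordered_group :: "'a::{group_add,linorder} itself \<Rightarrow> bool" where
  "bi_ordered_group _ \<longleftrightarrow> (\<forall>a b c::'a. a < b \<longrightarrow> c + a < c + b \<and> a + c < b + c)"

text \<open>Free product F*G as the set of reduced words: letters from F (Inl) or G (Inr),
  no identity letters, consecutive letters from different factors.\<close>

definition reduced_word :: "('f::group_add + 'g::group_add) list \<Rightarrow> bool" where
  "reduced_word w \<longleftrightarrow> (\<forall>a\<in>set w. a \<noteq> Inl 0 \<and> a \<noteq> Inr 0) \<and> successively (\<lambda>a b. isl a \<noteq> isl b) w"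

definition proj_F :: "('f::group_add + 'g::group_add) list \<Rightarrow> 'f" where
  "proj_F w = sum_list (map (case_sum id (\<lambda>_. 0)) w)"
definition proj_G :: "('f::group_add + 'g::group_add) list \<Rightarrow> 'g" where
  "proj_G w = sum_list (map (case_sum (\<lambda>_. 0) id) w)"

definition lex_less :: "('f::linorder \<times> 'g::linorder) \<Rightarrow> 'f \<times> 'g \<Rightarrow> bool" where
  "lex_less p q \<longleftrightarrow> fst p < fst q \<or> (fst p = fst q \<and> snd p < snd q)"

text \<open>The group ring R = Z(F\<times>G) is ('f \<times> 'g) =>0 int (convolution product).
  Positive: nonzero and the coefficient of the largest group element is positive.\<close>
definition R_pos :: "(('f::{group_add,linorder} \<times> 'g::{group_add,linorder}) \<Rightarrow>\<^sub>0 int) \<Rightarrow> bool" where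
  "R_pos r \<longleftrightarrow> (\<exists>h\<in>Poly_Mapping.keys r. (\<forall>h'\<in>Poly_Mapping.keys r. h' \<noteq> h \<longrightarrow> lex_less h' h) \<and> Poly_Mapping.lookup r h > 0)"

type_synonym ('f,'g) Rt = "nat \<Rightarrow>\<^sub>0 (('f \<times> 'g) \<Rightarrow>\<^sub>0 int)"
type_synonym ('f,'g) Mat = "('f,'g) Rt ^ 2 ^ 2"

definition mat2 :: "'a \<Rightarrow> 'a \<Rightarrow> 'a \<Rightarrow> 'a \<Rightarrow> 'a ^ 2 ^ 2" where
  "mat2 a b c d = (\<chi> i j. if i = 1 then (if j = 1 then a else b) else (if j = 1 then c else d))"

definition grp_elt :: "'f \<times> 'g \<Rightarrow> ('f \<times> 'g) \<Rightarrow>\<^sub>0 int" where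
  "grp_elt h = Poly_Mapping.single h 1"

definition const_t :: "(('f \<times> 'g) \<Rightarrow>\<^sub>0 int) \<Rightarrow> ('f,'g) Rt" where
  "const_t r = Poly_Mapping.single 0 r"

definition t_var :: "('f::group_add,'g::group_add) Rt" where
  "t_var = Poly_Mapping.single 1 1"

definition rho_letter :: "('f::group_add + 'g::group_add) \<Rightarrow> ('f,'g) Mat" where
  "rho_letter a = (case a of
      Inl f \<Rightarrow> mat2 (const_t (grp_elt (f, 0))) (const_t (grp_elt (f, 0) - 1) * t_var) 0 1
    | Inr g \<Rightarrow> mat2 1 0 (const_t (grp_elt (0, g) - 1) * t_var) (const_t (grp_elt (0, g))))"

definition rho :: "('f::group_add + 'g::group_add) list \<Rightarrow> ('f,'g) Mat" where
  "rho w = foldr (\<lambda>a M. rho_letter a ** M) w (mat 1)"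

definition positions :: "(2 \<times> 2) list" where
  "positions = [(1,1), (2,2), (1,2), (2,1)]"

definition coeff_entry :: "('f,'g) Mat \<Rightarrow> nat \<Rightarrow> 2 \<times> 2 \<Rightarrow> (('f \<times> 'g) \<Rightarrow>\<^sub>0 int)" where
  "coeff_entry M n p = Poly_Mapping.lookup (M $ fst p $ snd p) n"

definition M_pos :: "('f::{group_add,linorder},'g::{group_add,linorder}) Mat \<Rightarrow> bool" where
  "M_pos M \<longleftrightarrow> (\<exists>n. (\<exists>p\<in>set positions. coeff_entry M n p \<noteq> 0)
      \<and> (\<forall>m<n. \<forall>p\<in>set positions. coeff_entry M m p = 0)
      \<and> R_pos (hd (filter (\<lambda>r. r \<noteq> 0) (map (coeff_entry M n) positions))))"

definition fp_less :: "('f::{group_add,linorder} + 'g::{group_add,linorder}) list \<Rightarrow> ('f + 'g) list \<Rightarrow> bool" where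
  "fp_less x y \<longleftrightarrow> M_pos (rho y - rho x)"

definition fp_le :: "('f::{group_add,linorder} + 'g::{group_add,linorder}) list \<Rightarrow> ('f + 'g) list \<Rightarrow> bool" where
  "fp_le x y \<longleftrightarrow> x = y \<or> fp_less x y"

definition order_hom_on :: "'a set \<Rightarrow> ('a \<Rightarrow> 'a \<Rightarrow> bool) \<Rightarrow> ('b \<Rightarrow> 'b \<Rightarrow> bool) \<Rightarrow> ('a \<Rightarrow> 'b) \<Rightarrow> bool" where
  "order_hom_on A le1 le2 \<phi> \<longleftrightarrow> (\<forall>x\<in>A. \<forall>y\<in>A. le1 x y \<longrightarrow> le2 (\<phi> x) (\<phi> y))"

end

theory Submission imports Defs begin
lemma lookup_mult0: "Poly_Mapping.lookup (f * g) (0::nat) = Poly_Mapping.lookup f 0 * Poly_Mapping.lookup g 0"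
proof -
  have "\<And>l. (\<Sum>q. Poly_Mapping.lookup g q when (0::nat) = l + q) = (Poly_Mapping.lookup g 0 when l = 0)"
    by (simp add: when_def)
  then show ?thesis by (simp add: lookup_mult mult_when)
qed

lemma grp_mult: "grp_elt a * grp_elt b = grp_elt (a + b)"
  by (simp add: grp_elt_def mult_single)
lemma grp_zero: "grp_elt (0::'f::group_add, 0::'g::group_add) = 1"
  by (simp add: grp_elt_def flip: zero_prod_def)
lemma const_t0: "Poly_Mapping.lookup (const_t r) 0 = r"
  by (simp add: const_t_def)
lemma tvar0: "Poly_Mapping.lookup t_var 0 = 0"
  by (simp add: t_var_def lookup_single)

lemma mat2_nth: "mat2 a b c d $ i $ j = (if i = 1 then (if j = 1 then a else b) else (if j = 1 then c else d))"
  by (simp add: mat2_def)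

lemma rho0: "Poly_Mapping.lookup (rho (w::('f::group_add + 'g::group_add) list) $ i $ j) 0 =
   (if i = j then (if i = 1 then grp_elt (proj_F w, 0::'g) else grp_elt (0::'f, proj_G w)) else 0)"
proof (induction w arbitrary: i j)
  case Nil
  then show ?case by (simp add: rho_def mat_def proj_F_def proj_G_def grp_zero)
next
  case (Cons a w)
  have r: "rho (a#w) = rho_letter a ** rho w" by (simp add: rho_def)
  have e: "Poly_Mapping.lookup (rho (a#w) $ i $ j) 0 = (\<Sum>k\<in>UNIV. Poly_Mapping.lookup (rho_letter a $ i $ k) 0 * Poly_Mapping.lookup (rho w $ k $ j) 0)"
    by (simp add: r matrix_matrix_mult_def lookup_sum lookup_mult0)
  show ?case unfolding e sum_2 Cons.IH
    apply (cases a)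
    using exhaust_2[of i] exhaust_2[of j]
    by (auto simp: rho_letter_def mat2_nth lookup_mult0 const_t0 tvar0 proj_F_def proj_G_def grp_mult)
qed

lemma ce11: "coeff_entry (rho y - rho x) 0 (1,1) = grp_elt (proj_F y, 0) - grp_elt (proj_F x, 0)"
  by (simp add: coeff_entry_def lookup_minus rho0)

lemma diff_ne: "A \<noteq> B \<Longrightarrow> grp_elt A - grp_elt B \<noteq> 0"
  by (metis grp_elt_def eq_iff_diff_eq_0 lookup_single_eq lookup_single_not_eq zero_neq_one)

lemma R_pos_diff: "R_pos (grp_elt A - grp_elt B) \<Longrightarrow> A \<noteq> B \<Longrightarrow> lex_less B A"
  unfolding R_pos_def
proof -
  assume A: "\<exists>h\<in>Poly_Mapping.keys (grp_elt A - grp_elt B). (\<forall>h'\<in>Poly_Mapping.keys (grp_elt A - grp_elt B). h' \<noteq> h \<longrightarrow> lex_less h' h) \<and> 0 < Poly_Mapping.lookup (grp_elt A - grp_elt B) h"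
    and ne: "A \<noteq> B"
  then obtain h where h: "h\<in>Poly_Mapping.keys (grp_elt A - grp_elt B)" "\<forall>h'\<in>Poly_Mapping.keys (grp_elt A - grp_elt B). h' \<noteq> h \<longrightarrow> lex_less h' h" "0 < Poly_Mapping.lookup (grp_elt A - grp_elt B) h" by blast
  have lk: "Poly_Mapping.lookup (grp_elt A - grp_elt B) k = (if k = A then 1 else if k = B then -1 else 0)" for k
    using ne by (simp add: grp_elt_def lookup_minus lookup_single)
  have hA: "h = A" using h(3) lk[of h] by (auto split: if_splits)
  have "B \<in> Poly_Mapping.keys (grp_elt A - grp_elt B)" using lk[of B] ne by (simp add: in_keys_iff)
  then show ?thesis using h(2) hA ne by auto
qed

lemma R_pos_diff2: "lex_less B A \<Longrightarrow> R_pos (grp_elt A - grp_elt B)"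
proof -
  assume l: "lex_less B A"
  then have ne: "A \<noteq> B" by (auto simp: lex_less_def)
  have lk: "Poly_Mapping.lookup (grp_elt A - grp_elt B) k = (if k = A then 1 else if k = B then -1 else 0)" for k
    using ne by (simp add: grp_elt_def lookup_minus lookup_single)
  have keys: "Poly_Mapping.keys (grp_elt A - grp_elt B) = {A, B}"
    using lk ne by (auto simp: in_keys_iff split: if_splits)
  show ?thesis unfolding R_pos_def keys using lk l ne by auto
qed

lemma part1:
  assumes "fp_le x y"
  shows "proj_F x \<le> proj_F y"
proof (cases "x = y \<or> proj_F x = proj_F y")
  case True then show ?thesis by auto
next
  case False
  then have lt: "fp_less x y" and ne: "proj_F x \<noteq> proj_F y" using assms by (auto simp: fp_le_def)
  then obtain n where n: "(\<forall>m<n. \<forall>p\<in>set positions. coeff_entry (rho y - rho x) m p = 0)"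
      "R_pos (hd (filter (\<lambda>r. r \<noteq> 0) (map (coeff_entry (rho y - rho x) n) positions)))"
    unfolding fp_less_def M_pos_def by blast
  have nz: "coeff_entry (rho y - rho x) 0 (1,1) \<noteq> 0"
    unfolding ce11 using ne by (intro diff_ne) auto
  have "n = 0" using n(1) nz by (auto simp: positions_def)
  with n(2) nz have "R_pos (grp_elt (proj_F y, 0::'b) - grp_elt (proj_F x, 0))"
    by (simp add: positions_def ce11)
  from R_pos_diff[OF this] ne have "lex_less (proj_F x, 0::'b) (proj_F y, 0)" by auto
  then show ?thesis by (simp add: lex_less_def)
qed

theorem corollary4p4:
  assumes "bi_ordered_group TYPE('f::{group_add,linorder})"
      and "bi_ordered_group TYPE('g::{group_add,linorder})"
  shows "order_hom_on {w::('f + 'g) list. reduced_word w} fp_le (\<le>) proj_F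
     \<and> ((\<exists>a::'f. a \<noteq> 0) \<and> (\<exists>b::'g. b \<noteq> 0) \<longrightarrow>
          \<not> order_hom_on {w::('f + 'g) list. reduced_word w} fp_le (\<le>) proj_G)"
proof (intro conjI impI)
  show "order_hom_on {w::('f + 'g) list. reduced_word w} fp_le (\<le>) proj_F"
    unfolding order_hom_on_def using part1 by blast
next
  assume "(\<exists>a::'f. a \<noteq> 0) \<and> (\<exists>b::'g. b \<noteq> 0)"
  then obtain a :: 'f and b :: 'g where ab: "a \<noteq> 0" "b \<noteq> 0" by blast
  have "\<exists>f::'f. 0 < f"
  proof (cases "0 < a")
    case False
    then have "a < 0" using ab by auto
    then have "a + (-a) < 0 + (-a)" using assms(1) unfolding bi_ordered_group_def by blast
    then show ?thesis by auto
  qed auto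
  then obtain f :: 'f where f: "0 < f" by blast
  have "\<exists>g::'g. g < 0"
  proof (cases "b < 0")
    case False
    then have "0 < b" using ab by auto
    then have "0 + (-b) < b + (-b)" using assms(2) unfolding bi_ordered_group_def by blast
    then show ?thesis by auto
  qed auto
  then obtain g :: 'g where g: "g < 0" by blast
  define y :: "('f + 'g) list" where "y = [Inl f, Inr g]"
  have red: "reduced_word y" "reduced_word ([]::('f + 'g) list)"
    using f g by (auto simp: y_def reduced_word_def)
  have pF: "proj_F y = f" "proj_F ([]::('f + 'g) list) = 0" by (simp_all add: y_def proj_F_def)
  have pG: "proj_G y = g" "proj_G ([]::('f + 'g) list) = 0" by (simp_all add: y_def proj_G_def)
  have lx: "lex_less (0::'f, 0::'g) (f, 0)" using f by (simp add: lex_less_def)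
  have nz: "coeff_entry (rho y - rho []) 0 (1,1) \<noteq> 0"
    unfolding ce11 pF using f by (intro diff_ne) auto
  have "M_pos (rho y - rho [])"
    unfolding M_pos_def
    apply (rule exI[of _ 0])
    using nz R_pos_diff2[OF lx] by (auto simp: positions_def ce11 pF)
  then have "fp_le [] y" by (simp add: fp_le_def fp_less_def)
  moreover have "\<not> proj_G ([]::('f + 'g) list) \<le> proj_G y" using pG g by auto
  ultimately show "\<not> order_hom_on {w::('f + 'g) list. reduced_word w} fp_le (\<le>) proj_G"
    unfolding order_hom_on_def using red by blast
qed
end
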